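(* For every $i\in\mathbb{N}$ there exists a one-way nondeterministic nonerasing stack automaton $A_i$ with $L(A_i)=L(x_i)$, where $x_i$ is Larsen's rewb defined below. In particular each $L(x_i)$ is a nonerasing stack language.
   Context: Alphabet $\Sigma=\{a_j^l,a_j^m,a_j^r : j\in\mathbb{N}\}$ (for fixed $i$ only the finitely many letters with $j\le i$ occur). Larsen's rewbs: $x_0=(a_0^la_0^ma_0^r)^\ast$ and $x_{i+1}=\big(a_{i+1}^l\,(_i\,x_i\,)_i\,a_{i+1}^m\,\backslash i\,a_{i+1}^r\big)^\ast$ for $i\ge0$ (capture labels are natural numbers $0,\dots,i-1$). Rewb semantics: with bracket symbols $[_j,]_j$ and number symbols $j$ for each label, $\mathcal{R}(x)$ is the regular language obtained by reading $x$ as a regular expression with $\backslash j$ as the letter $j$ and $(_j\beta)_j$ as $[_j\,\mathcal{R}(\beta)\,]_j$. Dereferencing: repeatedly take the leftmost number symbol $j$; if no $[_j$ lies to its left delete it; else take the nearest $[_j$ to its left; if no $]_j$ lies between them the result is undefined; else replace this $j$ by the string strictly between that $[_j$ and the first subsequent $]_j$ with all brackets erased; finally delete all brackets. $L(x)$ is the set of dereferenced strings of $\mathcal{R}(x)$. Stack automaton (SA): nondeterministic finite control, one-way read-only input, stack over $\Gamma$ with initial symbol $Z_0$ between bottom marker $\#$ and top marker $\$$; a pointer moves left/right reading symbols anywhere; only at the top symbol $Z$ may the machine replace $Z$ by $w\in\Gamma^\ast$; acceptance by final state after consuming the input. A nonerasing stack automaton is an SA in which every top replacement has the form $Z\mapsto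 Zw$ with $w\in\Gamma^\ast$. *)

theory Defs
  imports Main
begin

datatype letter = AL nat | AM nat | AR nat

datatype rewb =
    REmpty
  | REps
  | RLit letter
  | RCat rewb rewb
  | RAlt rewb rewb
  | RStar rewb
  | RCap nat rewb
  | RRef nat

datatype sym = Ch letter | Open nat | Close nat | Num nat

definition conc :: "'a list set \<Rightarrow> 'a list set \<Rightarrow> 'a list set" where
  "conc A B = {u @ v | u v. u \<in> A \<and> v \<in> B}"

definition kstar :: "'a list set \<Rightarrow> 'a list set" where
  "kstar A = {concat ws | ws. set ws \<subseteq> A}"

fun R :: "rewb \<Rightarrow> sym list set" where
  "R REmpty = {}"
| "R REps = {[]}"
| "R (RLit a) = {[Ch a]}"
| "R (RCat x y) = conc (R x) (R y)"
| "R (RAlt x y) = R x \<union> R y"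
| "R (RStar x) = kstar (R x)"
| "R (RCap j x) = conc {[Open j]} (conc (R x) {[Close j]})"
| "R (RRef j) = {[Num j]}"

definition letters :: "sym list \<Rightarrow> letter list" where
  "letters u = [a. Ch a \<leftarrow> u]"

(* Dereferencing.  deref_go u v: u is the already-processed prefix (it contains no
   number symbol), so the first number symbol of v is the leftmost number symbol of
   the whole string u @ v. *)
fun deref_go :: "sym list \<Rightarrow> sym list \<Rightarrow> letter list option" where
  "deref_go u [] = Some (letters u)"
| "deref_go u (Num j # v) =
     (if Open j \<notin> set u then deref_go u v
      else (let u2 = rev (takeWhile (\<lambda>s. s \<noteq> Open j) (rev u)) in
            if Close j \<notin> set u2 then None
            else deref_go (u @ map Ch (letters (takeWhile (\<lambda>s. s \<noteq> Close j) u2))) v))"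
| "deref_go u (s # v) = deref_go (u @ [s]) v"

definition deref :: "sym list \<Rightarrow> letter list option" where
  "deref w = deref_go [] w"

definition rewb_lang :: "rewb \<Rightarrow> letter list set" where
  "rewb_lang x = {w. \<exists>s \<in> R x. deref s = Some w}"

fun larsen :: "nat \<Rightarrow> rewb" where
  "larsen 0 = RStar (RCat (RLit (AL 0)) (RCat (RLit (AM 0)) (RLit (AR 0))))"
| "larsen (Suc i) = RStar (RCat (RLit (AL (Suc i)))
      (RCat (RCap i (larsen i)) (RCat (RLit (AM (Suc i))) (RCat (RRef i) (RLit (AR (Suc i)))))))"

datatype 'g stsym = Bot | Top | G 'g

datatype 'g action = MoveL | MoveR | Stay | Replace "'g list"

record ('q, 'g) sa =
  states :: "'q set"
  init :: 'q
  finals :: "'q set"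
  stack_alph :: "'g set"
  z0 :: 'g
  delta :: "('q \<times> letter option \<times> 'g stsym \<times> 'q \<times> 'g action) set"

definition sa_wf :: "('q, 'g) sa \<Rightarrow> bool" where
  "sa_wf A \<longleftrightarrow> finite (states A) \<and> finite (stack_alph A) \<and> finite (delta A)
     \<and> init A \<in> states A \<and> finals A \<subseteq> states A \<and> z0 A \<in> stack_alph A
     \<and> (\<forall>(q, a, X, q', act) \<in> delta A. q \<in> states A \<and> q' \<in> states A
          \<and> (\<forall>Z. X = G Z \<longrightarrow> Z \<in> stack_alph A)
          \<and> (\<forall>w. act = Replace w \<longrightarrow> set w \<subseteq> stack_alph A))"

definition nonerasing :: "('q, 'g) sa \<Rightarrow> bool" where
  "nonerasing A \<longleftrightarrow> (\<forall>(q, a, X, q', act) \<in> delta A.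
      \<forall>w. act = Replace w \<longrightarrow> (\<exists>Z w'. X = G Z \<and> w = Z # w'))"

(* stack contents s listed bottom to top; positions: 0 = #, 1..length s = stack
   symbols, length s + 1 = $ *)
definition sym_at :: "'g list \<Rightarrow> nat \<Rightarrow> 'g stsym" where
  "sym_at s p = (if p = 0 then Bot else if p \<le> length s then G (s ! (p - 1)) else Top)"

type_synonym ('q, 'g) config = "'q \<times> letter list \<times> 'g list \<times> nat"

definition sa_step :: "('q, 'g) sa \<Rightarrow> ('q, 'g) config \<Rightarrow> ('q, 'g) config \<Rightarrow> bool" where
  "sa_step A c c' \<longleftrightarrow> (case (c, c') of ((q, u, s, p), (q', u', s', p')) \<Rightarrow>
     \<exists>a X act. (q, a, X, q', act) \<in> delta A \<and> p \<le> length s + 1 \<and> X = sym_at s p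
       \<and> u = (case a of None \<Rightarrow> [] | Some b \<Rightarrow> [b]) @ u'
       \<and> (case act of
            MoveL \<Rightarrow> 0 < p \<and> s' = s \<and> p' = p - 1
          | MoveR \<Rightarrow> p \<le> length s \<and> s' = s \<and> p' = p + 1
          | Stay \<Rightarrow> s' = s \<and> p' = p
          | Replace w \<Rightarrow> s \<noteq> [] \<and> p = length s \<and> s' = butlast s @ w \<and> p' = length s'))"

definition sa_lang :: "('q, 'g) sa \<Rightarrow> letter list set" where
  "sa_lang A = {u. \<exists>q s p. (sa_step A)\<^sup>*\<^sup>* (init A, u, [z0 A], 1) (q, [], s, p) \<and> q \<in> finals A}"

end

theory Submission
  imports Defs "HOL-Library.Countable"
begin


definition blk :: "nat \<Rightarrow> letter list \<Rightarrow> letter list" where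
  "blk n v = AL n # v @ AM n # v @ [AR n]"

fun Nw :: "nat \<Rightarrow> letter list set" where
  "Nw 0 = {[]}"
| "Nw (Suc n) = kstar {blk n v | v. v \<in> Nw n}"

definition proc :: "sym list \<Rightarrow> sym list \<Rightarrow> bool" where
  "proc s t \<longleftrightarrow> (\<forall>u v. deref_go u (s @ v) = deref_go (u @ t) v)"

definition lab_lt :: "nat \<Rightarrow> sym list \<Rightarrow> bool" where
  "lab_lt k t \<longleftrightarrow> (\<forall>j. (Open j \<in> set t \<or> Close j \<in> set t) \<longrightarrow> j < k)"

lemma letters_append[simp]: "letters (xs @ ys) = letters xs @ letters ys"
  by (simp add: letters_def)

lemma letters_Cons[simp]: "letters (Ch a # xs) = a # letters xs"
  "letters (Open j # xs) = letters xs" "letters (Close j # xs) = letters xs"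
  "letters (Num j # xs) = letters xs" "letters [] = []"
  by (simp_all add: letters_def)

lemma letters_map[simp]: "letters (map Ch x) = x"
  by (induction x) auto

lemma proc_Nil: "proc [] []" by (simp add: proc_def)

lemma proc_app: "proc s1 t1 \<Longrightarrow> proc s2 t2 \<Longrightarrow> proc (s1 @ s2) (t1 @ t2)"
  by (simp add: proc_def)

lemma proc_Ch: "proc [Ch a] [Ch a]" by (simp add: proc_def)
lemma proc_Open: "proc [Open a] [Open a]" by (simp add: proc_def)
lemma proc_Close: "proc [Close a] [Close a]" by (simp add: proc_def)

lemma deref_Num:
  assumes "Open k \<notin> set t" "Close k \<notin> set t"
  shows "deref_go (u @ Open k # t @ [Close k, Ch m]) (Num k # v)
       = deref_go (u @ Open k # t @ [Close k, Ch m] @ map Ch (letters t)) v"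
proof -
  have r: "rev (u @ Open k # t @ [Close k, Ch m]) = [Ch m, Close k] @ rev t @ Open k # rev u" by simp
  have tw0: "takeWhile (\<lambda>s. s \<noteq> Open k) (rev t @ Open k # rev u) = rev t"
    using assms by (subst takeWhile_append2) auto
  have tw: "takeWhile (\<lambda>s. s \<noteq> Open k) (rev (u @ Open k # t @ [Close k, Ch m])) = [Ch m, Close k] @ rev t"
    unfolding r using tw0 by simp
  have tw2: "takeWhile (\<lambda>s. s \<noteq> Close k) (t @ [Close k, Ch m]) = t"
    using assms by (subst takeWhile_append2) auto
  show ?thesis using assms by (simp add: tw0 tw2 Let_def)
qed

lemma proc_blk:
  assumes "proc s t" "lab_lt k t"
  shows "proc (Ch l # Open k # s @ [Close k, Ch m, Num k, Ch r])
              (Ch l # Open k # t @ [Close k, Ch m] @ map Ch (letters t) @ [Ch r])"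
  unfolding proc_def
proof (intro allI)
  fix u v
  have nt: "Open k \<notin> set t" "Close k \<notin> set t" using assms(2) by (auto simp: lab_lt_def)
  have "deref_go u ((Ch l # Open k # s @ [Close k, Ch m, Num k, Ch r]) @ v)
      = deref_go (u @ [Ch l, Open k]) (s @ (Close k # Ch m # Num k # Ch r # v))" by simp
  also have "\<dots> = deref_go ((u @ [Ch l]) @ Open k # t) (Close k # Ch m # Num k # Ch r # v)"
    using assms(1) unfolding proc_def by simp
  also have "\<dots> = deref_go ((u @ [Ch l]) @ Open k # t @ [Close k, Ch m]) (Num k # Ch r # v)" by simp
  also have "\<dots> = deref_go ((u @ [Ch l]) @ Open k # t @ [Close k, Ch m] @ map Ch (letters t)) (Ch r # v)"
    by (rule deref_Num[OF nt])
  also have "\<dots> = deref_go (u @ (Ch l # Open k # t @ [Close k, Ch m] @ map Ch (letters t) @ [Ch r])) v" by simp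
  finally show "deref_go u ((Ch l # Open k # s @ [Close k, Ch m, Num k, Ch r]) @ v)
      = deref_go (u @ (Ch l # Open k # t @ [Close k, Ch m] @ map Ch (letters t) @ [Ch r])) v" .
qed

lemma kstar_Nil: "[] \<in> kstar A" unfolding kstar_def by (rule CollectI, rule exI[of _ "[]"]) simp

lemma kstar_Cons: assumes "b \<in> A" "x \<in> kstar A" shows "b @ x \<in> kstar A"
proof -
  obtain ws where "x = concat ws" "set ws \<subseteq> A" using assms(2) unfolding kstar_def by auto
  then show ?thesis using assms(1) unfolding kstar_def by (intro CollectI exI[of _ "b # ws"]) auto
qed

lemma star_sound:
  assumes "\<forall>s\<in>S. \<exists>t. lab_lt k t \<and> letters t \<in> B \<and> proc s t"
  shows "\<forall>s\<in>kstar S. \<exists>t. lab_lt k t \<and> letters t \<in> kstar B \<and> proc s t"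
proof
  fix s assume "s \<in> kstar S"
  then obtain ws where s: "s = concat ws" "set ws \<subseteq> S" unfolding kstar_def by auto
  have "\<exists>t. lab_lt k t \<and> letters t \<in> kstar B \<and> proc (concat ws) t" using s(2)
  proof (induction ws)
    case Nil then show ?case using proc_Nil kstar_Nil by (intro exI[of _ "[]"]) (auto simp: lab_lt_def)
  next
    case (Cons a ws)
    then obtain t where t: "lab_lt k t" "letters t \<in> kstar B" "proc (concat ws) t" by auto
    obtain t1 where t1: "lab_lt k t1" "letters t1 \<in> B" "proc a t1" using assms Cons.prems by auto
    show ?case using t t1 proc_app[OF t1(3) t(3)] kstar_Cons[OF t1(2) t(2)]
      by (intro exI[of _ "t1 @ t"]) (auto simp: lab_lt_def)
  qed
  then show "\<exists>t. lab_lt k t \<and> letters t \<in> kstar B \<and> proc s t" using s by simp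
qed

lemma star_complete:
  assumes "\<forall>w\<in>B. \<exists>s\<in>S. \<exists>t. lab_lt k t \<and> letters t = w \<and> proc s t"
  shows "\<forall>w\<in>kstar B. \<exists>s\<in>kstar S. \<exists>t. lab_lt k t \<and> letters t = w \<and> proc s t"
proof
  fix w assume "w \<in> kstar B"
  then obtain ws where s: "w = concat ws" "set ws \<subseteq> B" unfolding kstar_def by auto
  have "\<exists>s\<in>kstar S. \<exists>t. lab_lt k t \<and> letters t = concat ws \<and> proc s t" using s(2)
  proof (induction ws)
    case Nil then show ?case using proc_Nil kstar_Nil by (intro bexI[of _ "[]"] exI[of _ "[]"]) (auto simp: lab_lt_def)
  next
    case (Cons a ws)
    then obtain s t where t: "s \<in> kstar S" "lab_lt k t" "letters t = concat ws" "proc s t" by auto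
    obtain s1 t1 where t1: "s1 \<in> S" "lab_lt k t1" "letters t1 = a" "proc s1 t1" using assms Cons.prems by auto
    show ?case using t t1 proc_app[OF t1(4) t(4)] kstar_Cons[OF t1(1) t(1)]
      by (intro bexI[of _ "s1 @ s"] exI[of _ "t1 @ t"]) (auto simp: lab_lt_def)
  qed
  then show "\<exists>s\<in>kstar S. \<exists>t. lab_lt k t \<and> letters t = w \<and> proc s t" using s by simp
qed

lemma R_blk0: "R (RCat (RLit (AL 0)) (RCat (RLit (AM 0)) (RLit (AR 0)))) = {[Ch (AL 0), Ch (AM 0), Ch (AR 0)]}"
  by (simp add: conc_def)

lemma R_blkS: "R (RCat (RLit (AL (Suc i)))
      (RCat (RCap i x) (RCat (RLit (AM (Suc i))) (RCat (RRef i) (RLit (AR (Suc i)))))))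
  = {Ch (AL (Suc i)) # Open i # s @ [Close i, Ch (AM (Suc i)), Num i, Ch (AR (Suc i))] | s. s \<in> R x}"
  by (auto simp: conc_def)

lemma larsen_char:
  "(\<forall>s\<in>R (larsen k). \<exists>t. lab_lt k t \<and> letters t \<in> Nw (Suc k) \<and> proc s t) \<and>
   (\<forall>w\<in>Nw (Suc k). \<exists>s\<in>R (larsen k). \<exists>t. lab_lt k t \<and> letters t = w \<and> proc s t)"
proof (induction k)
  case 0
  have B: "{blk 0 v | v. v \<in> Nw 0} = {[AL 0, AM 0, AR 0]}" by (auto simp: blk_def)
  have p: "proc [Ch (AL 0), Ch (AM 0), Ch (AR 0)] [Ch (AL 0), Ch (AM 0), Ch (AR 0)]"
    using proc_app[OF proc_Ch proc_app[OF proc_Ch proc_Ch]] by simp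
  have a: "\<forall>s\<in>{[Ch (AL 0), Ch (AM 0), Ch (AR 0)]}. \<exists>t. lab_lt 0 t \<and> letters t \<in> {[AL 0, AM 0, AR 0]} \<and> proc s t"
    using p by (intro ballI exI[of _ "[Ch (AL 0), Ch (AM 0), Ch (AR 0)]"]) (auto simp: lab_lt_def)
  have b: "\<forall>w\<in>{[AL 0, AM 0, AR 0]}. \<exists>s\<in>{[Ch (AL 0), Ch (AM 0), Ch (AR 0)]}. \<exists>t. lab_lt 0 t \<and> letters t = w \<and> proc s t"
    using p by (intro ballI bexI[of _ "[Ch (AL 0), Ch (AM 0), Ch (AR 0)]"] exI[of _ "[Ch (AL 0), Ch (AM 0), Ch (AR 0)]"]) (auto simp: lab_lt_def)
  show ?case unfolding larsen.simps R.simps(6) R_blk0 Nw.simps(2)[of 0] B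
    using star_sound[OF a] star_complete[OF b] by blast
next
  case (Suc k)
  have a: "\<forall>s\<in>{Ch (AL (Suc k)) # Open k # s @ [Close k, Ch (AM (Suc k)), Num k, Ch (AR (Suc k))] | s. s \<in> R (larsen k)}.
     \<exists>t. lab_lt (Suc k) t \<and> letters t \<in> {blk (Suc k) v | v. v \<in> Nw (Suc k)} \<and> proc s t"
  proof
    fix s0 assume "s0 \<in> {Ch (AL (Suc k)) # Open k # s @ [Close k, Ch (AM (Suc k)), Num k, Ch (AR (Suc k))] | s. s \<in> R (larsen k)}"
    then obtain s where s: "s0 = Ch (AL (Suc k)) # Open k # s @ [Close k, Ch (AM (Suc k)), Num k, Ch (AR (Suc k))]" "s \<in> R (larsen k)" by auto
    obtain t where t: "lab_lt k t" "letters t \<in> Nw (Suc k)" "proc s t" using Suc.IH s(2) by blast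
    show "\<exists>t. lab_lt (Suc k) t \<and> letters t \<in> {blk (Suc k) v | v. v \<in> Nw (Suc k)} \<and> proc s0 t"
      using proc_blk[OF t(3) t(1)] t(1,2) unfolding s(1)
      by (intro exI[of _ "Ch (AL (Suc k)) # Open k # t @ [Close k, Ch (AM (Suc k))] @ map Ch (letters t) @ [Ch (AR (Suc k))]"])
         (auto simp: lab_lt_def blk_def)
  qed
  have b: "\<forall>w\<in>{blk (Suc k) v | v. v \<in> Nw (Suc k)}. \<exists>s\<in>{Ch (AL (Suc k)) # Open k # s @ [Close k, Ch (AM (Suc k)), Num k, Ch (AR (Suc k))] | s. s \<in> R (larsen k)}. \<exists>t. lab_lt (Suc k) t \<and> letters t = w \<and> proc s t"
  proof
    fix w assume "w \<in> {blk (Suc k) v | v. v \<in> Nw (Suc k)}"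
    then obtain v where v: "w = blk (Suc k) v" "v \<in> Nw (Suc k)" by auto
    obtain s t where st: "s \<in> R (larsen k)" "lab_lt k t" "letters t = v" "proc s t" using Suc.IH v(2) by blast
    show "\<exists>s\<in>{Ch (AL (Suc k)) # Open k # s @ [Close k, Ch (AM (Suc k)), Num k, Ch (AR (Suc k))] | s. s \<in> R (larsen k)}. \<exists>t. lab_lt (Suc k) t \<and> letters t = w \<and> proc s t"
      using proc_blk[OF st(4) st(2)] st v
      by (intro bexI[of _ "Ch (AL (Suc k)) # Open k # s @ [Close k, Ch (AM (Suc k)), Num k, Ch (AR (Suc k))]"]
          exI[of _ "Ch (AL (Suc k)) # Open k # t @ [Close k, Ch (AM (Suc k))] @ map Ch (letters t) @ [Ch (AR (Suc k))]"])
         (auto simp: lab_lt_def blk_def)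
  qed
  show ?case unfolding larsen.simps R.simps(6) R_blkS Nw.simps(2)[of "Suc k"]
    using star_sound[OF a] star_complete[OF b] by blast
qed


lemma rewb_lang_larsen: "rewb_lang (larsen k) = Nw (Suc k)"
proof
  show "rewb_lang (larsen k) \<subseteq> Nw (Suc k)"
  proof
    fix w assume "w \<in> rewb_lang (larsen k)"
    then obtain s where s: "s \<in> R (larsen k)" "deref s = Some w" by (auto simp: rewb_lang_def)
    obtain t where t: "letters t \<in> Nw (Suc k)" "proc s t" using larsen_char s(1) by blast
    have "deref s = Some (letters t)" using t(2) unfolding deref_def proc_def
      by (metis append.right_neutral append_Nil deref_go.simps(1))
    then show "w \<in> Nw (Suc k)" using s t by simp
  qed
  show "Nw (Suc k) \<subseteq> rewb_lang (larsen k)"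
  proof
    fix w assume "w \<in> Nw (Suc k)"
    then obtain s t where t: "s \<in> R (larsen k)" "letters t = w" "proc s t" using larsen_char by blast
    have "deref s = Some (letters t)" using t(3) unfolding deref_def proc_def
      by (metis append.right_neutral append_Nil deref_go.simps(1))
    then show "w \<in> rewb_lang (larsen k)" using t by (auto simp: rewb_lang_def)
  qed
qed




datatype st = Q nat | D "nat list" | T "nat list"
datatype ss = SZ | SL nat | SM nat | SRef nat

definition FL :: "nat \<Rightarrow> nat list set" where
  "FL i = {l. l \<noteq> [] \<and> sorted_wrt (<) l \<and> set l \<subseteq> {..i}}"

definition Stt :: "nat \<Rightarrow> st set" where
  "Stt i = Q ` {..Suc i} \<union> D ` FL i \<union> T ` FL i"

fun lvok :: "nat \<Rightarrow> ss \<Rightarrow> bool" where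
  "lvok n SZ = False" | "lvok n (SL j) = (j < n)" | "lvok n (SM j) = (j < n)" | "lvok n (SRef j) = (j < n)"

definition Gam :: "nat \<Rightarrow> ss set" where "Gam i = insert SZ {x. lvok (Suc i) x}"

definition Lets :: "nat \<Rightarrow> letter set" where
  "Lets i = AL ` {..i} \<union> AM ` {..i} \<union> AR ` {..i}"

definition tr :: "st \<times> letter option \<times> ss stsym \<times> st \<times> ss action \<Rightarrow> bool" where
  "tr t \<longleftrightarrow> (case t of (q, a, X, q', act) \<Rightarrow>
     (\<exists>n Z. q = Q (Suc n) \<and> a = Some (AL n) \<and> X = G Z \<and> q' = Q n \<and> act = Replace [Z, SL n])
   \<or> (\<exists>n Z. q = Q n \<and> a = Some (AM n) \<and> X = G Z \<and> q' = D [n] \<and> act = Replace [Z, SM n])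
   \<or> (\<exists>h hs Z. q = D (h#hs) \<and> X = G Z \<and> Z \<noteq> SL h \<and> a = None \<and> q' = q \<and> act = MoveL)
   \<or> (\<exists>h hs. q = D (h#hs) \<and> X = G (SL h) \<and> a = None \<and> q' = T (h#hs) \<and> act = MoveR)
   \<or> (\<exists>h hs j. q = T (h#hs) \<and> j < h \<and> X = G (SL j) \<and> a = Some (AL j) \<and> q' = q \<and> act = MoveR)
   \<or> (\<exists>h hs j. q = T (h#hs) \<and> j < h \<and> X = G (SM j) \<and> a = Some (AM j) \<and> q' = q \<and> act = MoveR)
   \<or> (\<exists>h hs. q = T (h#hs) \<and> hs \<noteq> [] \<and> X = G (SM h) \<and> a = None \<and> q' = q \<and> act = MoveR)
   \<or> (\<exists>h. q = T [h] \<and> X = G (SM h) \<and> a = Some (AR h) \<and> q' = Q (Suc h) \<and> act = Replace [SM h, SRef h])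
   \<or> (\<exists>h hs j. q = T (h#hs) \<and> j < h \<and> X = G (SRef j) \<and> a = None \<and> q' = D (j#h#hs) \<and> act = MoveL)
   \<or> (\<exists>h hs. q = T (h#hs) \<and> X = G (SRef h) \<and> a = Some (AR h) \<and> q' = T hs \<and> act = MoveR))"

definition dlt :: "nat \<Rightarrow> (st \<times> letter option \<times> ss stsym \<times> st \<times> ss action) set" where
  "dlt i = {t. tr t \<and> (case t of (q, a, X, q', act) \<Rightarrow> q \<in> Stt i \<and> q' \<in> Stt i
     \<and> (\<forall>Z. X = G Z \<longrightarrow> Z \<in> Gam i) \<and> (\<forall>w. act = Replace w \<longrightarrow> set w \<subseteq> Gam i \<and> length w = 2)
     \<and> (\<forall>b. a = Some b \<longrightarrow> b \<in> Lets i))}"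

definition A0 :: "nat \<Rightarrow> (st, ss) sa" where
  "A0 i = \<lparr>states = Stt i, init = Q (Suc i), finals = {Q (Suc i)}, stack_alph = Gam i, z0 = SZ, delta = dlt i\<rparr>"

lemma A0_simps[simp]: "states (A0 i) = Stt i" "init (A0 i) = Q (Suc i)" "finals (A0 i) = {Q (Suc i)}"
  "stack_alph (A0 i) = Gam i" "z0 (A0 i) = SZ" "delta (A0 i) = dlt i"
  by (simp_all add: A0_def)

lemma FL_push: "h#hs \<in> FL i \<Longrightarrow> j < h \<Longrightarrow> j#h#hs \<in> FL i"
  by (auto simp: FL_def)
lemma FL_tl: "h#hs \<in> FL i \<Longrightarrow> hs \<noteq> [] \<Longrightarrow> hs \<in> FL i"
  by (auto simp: FL_def)
lemma FL_single: "h \<le> i \<Longrightarrow> [h] \<in> FL i"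
  by (auto simp: FL_def)
lemma FL_hd: "h#hs \<in> FL i \<Longrightarrow> h \<le> i"
  by (auto simp: FL_def)

lemma tQL: "n \<le> i \<Longrightarrow> Z \<in> Gam i \<Longrightarrow> (Q (Suc n), Some (AL n), G Z, Q n, Replace [Z, SL n]) \<in> dlt i"
  by (auto simp: dlt_def tr_def Stt_def Gam_def Lets_def)
lemma tQM: "n \<le> i \<Longrightarrow> Z \<in> Gam i \<Longrightarrow> (Q n, Some (AM n), G Z, D [n], Replace [Z, SM n]) \<in> dlt i"
  by (auto simp: dlt_def tr_def Stt_def Gam_def Lets_def intro: FL_single)
lemma tDL: "h#hs \<in> FL i \<Longrightarrow> Z \<in> Gam i \<Longrightarrow> Z \<noteq> SL h \<Longrightarrow> (D (h#hs), None, G Z, D (h#hs), MoveL) \<in> dlt i"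
  by (auto simp: dlt_def tr_def Stt_def)
lemma tDR: "h#hs \<in> FL i \<Longrightarrow> (D (h#hs), None, G (SL h), T (h#hs), MoveR) \<in> dlt i"
  by (auto simp: dlt_def tr_def Stt_def Gam_def dest: FL_hd)
lemma tTL: "h#hs \<in> FL i \<Longrightarrow> j < h \<Longrightarrow> (T (h#hs), Some (AL j), G (SL j), T (h#hs), MoveR) \<in> dlt i"
  by (auto simp: dlt_def tr_def Stt_def Gam_def Lets_def dest: FL_hd)
lemma tTM: "h#hs \<in> FL i \<Longrightarrow> j < h \<Longrightarrow> (T (h#hs), Some (AM j), G (SM j), T (h#hs), MoveR) \<in> dlt i"
  by (auto simp: dlt_def tr_def Stt_def Gam_def Lets_def dest: FL_hd)
lemma tTMh: "h#hs \<in> FL i \<Longrightarrow> hs \<noteq> [] \<Longrightarrow> (T (h#hs), None, G (SM h), T (h#hs), MoveR) \<in> dlt i"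
  by (auto simp: dlt_def tr_def Stt_def Gam_def dest: FL_hd)
lemma tX: "h \<le> i \<Longrightarrow> (T [h], Some (AR h), G (SM h), Q (Suc h), Replace [SM h, SRef h]) \<in> dlt i"
  by (auto simp: dlt_def tr_def Stt_def Gam_def Lets_def intro: FL_single)
lemma tTRef: "h#hs \<in> FL i \<Longrightarrow> j < h \<Longrightarrow> (T (h#hs), None, G (SRef j), D (j#h#hs), MoveL) \<in> dlt i"
  by (auto simp: dlt_def tr_def Stt_def Gam_def dest: FL_hd intro: FL_push)
lemma tTRh: "h#hs \<in> FL i \<Longrightarrow> hs \<noteq> [] \<Longrightarrow> (T (h#hs), Some (AR h), G (SRef h), T hs, MoveR) \<in> dlt i"
  by (auto simp: dlt_def tr_def Stt_def Gam_def Lets_def dest: FL_hd intro: FL_tl)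

lemma tr_det:
  assumes "tr (q, a, X, q1, act1)" "tr (q, a', X, q2, act2)" "\<forall>m. q \<noteq> Q m"
  shows "a = a' \<and> q1 = q2 \<and> act1 = act2"
  using assms unfolding tr_def by auto

lemma tr_noQ:
  assumes "tr (q, a, X, q1, act)" "\<forall>m. q \<noteq> Q m" "\<forall>w. act \<noteq> Replace w"
  shows "\<forall>m. q1 \<noteq> Q m"
  using assms unfolding tr_def by auto

subsection \<open>Codes\<close>

inductive codes :: "nat \<Rightarrow> letter list \<Rightarrow> ss list \<Rightarrow> bool" where
  c0: "codes n [] []"
| cs: "codes (Suc n) w c \<Longrightarrow> codes n v d \<Longrightarrow> codes (Suc n) (w @ blk n v) (c @ SL n # d @ [SM n, SRef n])"

lemma lvok_mono: "lvok n x \<Longrightarrow> n \<le> m \<Longrightarrow> lvok m x"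
  by (cases x) auto

lemma codes_lv: "codes n w d \<Longrightarrow> x \<in> set d \<Longrightarrow> lvok n x"
  by (induction rule: codes.induct) (auto intro: lvok_mono)

lemma kstar_snoc: assumes "x \<in> kstar A" "b \<in> A" shows "x @ b \<in> kstar A"
proof -
  obtain ws where "x = concat ws" "set ws \<subseteq> A" using assms(1) unfolding kstar_def by auto
  then show ?thesis using assms(2) unfolding kstar_def by (intro CollectI exI[of _ "ws @ [b]"]) auto
qed

lemma codes_Nw: "codes n w d \<Longrightarrow> w \<in> Nw n"
proof (induction rule: codes.induct)
  case (c0 n) then show ?case by (cases n) (auto intro: kstar_Nil)
next
  case (cs n w c v d) then show ?case by (auto intro: kstar_snoc)
qed

lemma Nw_codes: "w \<in> Nw n \<Longrightarrow> \<exists>d. codes n w d"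
proof (induction n arbitrary: w)
  case 0 then show ?case by (auto intro: codes.c0)
next
  case (Suc n)
  then obtain ws where ws: "w = concat ws" "set ws \<subseteq> {blk n v | v. v \<in> Nw n}" by (auto simp: kstar_def)
  have "\<exists>d. codes (Suc n) (concat ws) d" using ws(2)
  proof (induction ws rule: rev_induct)
    case Nil then show ?case by (auto intro: codes.c0)
  next
    case (snoc b ws)
    then obtain c where c: "codes (Suc n) (concat ws) c" by auto
    obtain v where v: "b = blk n v" "v \<in> Nw n" using snoc.prems by auto
    obtain d where d: "codes n v d" using Suc.IH v(2) by blast
    show ?case using codes.cs[OF c d] v by auto
  qed
  then show ?case using ws by simp
qed

subsection \<open>Compare paths\<close>

definition ol :: "letter option \<Rightarrow> letter list" where
  "ol a = (case a of None \<Rightarrow> [] | Some b \<Rightarrow> [b])"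

lemma ol_simps[simp]: "ol None = []" "ol (Some b) = [b]" by (simp_all add: ol_def)

inductive cpath :: "nat \<Rightarrow> ss list \<Rightarrow> st \<times> nat \<Rightarrow> letter list \<Rightarrow> st \<times> nat \<Rightarrow> bool" for i s where
  cp_refl: "cpath i s c [] c"
| cp_step: "(q, a, sym_at s p, q1, act) \<in> dlt i \<Longrightarrow> p \<le> length s + 1 \<Longrightarrow>
    (act = MoveL \<and> 0 < p \<and> p1 = p - 1 \<or> act = MoveR \<and> p \<le> length s \<and> p1 = p + 1) \<Longrightarrow>
    cpath i s (q1, p1) z c \<Longrightarrow> cpath i s (q, p) (ol a @ z) c"

lemma cpath_trans: "cpath i s c1 z1 c2 \<Longrightarrow> cpath i s c2 z2 c3 \<Longrightarrow> cpath i s c1 (z1 @ z2) c3"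
  by (induction rule: cpath.induct) (auto intro: cpath.intros)

lemma cp_one: "(q, a, X, q1, act) \<in> dlt i \<Longrightarrow> sym_at s p = X \<Longrightarrow> p \<le> length s + 1 \<Longrightarrow>
    (act = MoveL \<and> 0 < p \<and> p1 = p - 1 \<or> act = MoveR \<and> p \<le> length s \<and> p1 = p + 1) \<Longrightarrow>
    cpath i s (q, p) (ol a) (q1, p1)"
  using cp_step[OF _ _ _ cp_refl] by fastforce

lemma cpath_run: "cpath i s c z c' \<Longrightarrow>
  (sa_step (A0 i))\<^sup>*\<^sup>* (fst c, z @ u, s, snd c) (fst c', u, s, snd c')"
proof (induction rule: cpath.induct)
  case (cp_refl c) then show ?case by simp
next
  case (cp_step q a p q1 act p1 z c)
  have "sa_step (A0 i) (q, ol a @ z @ u, s, p) (q1, z @ u, s, p1)"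
    unfolding sa_step_def prod.case using cp_step.hyps(1-3)
    by (intro exI[of _ a] exI[of _ "sym_at s p"] exI[of _ act]) (auto simp: ol_def split: option.splits)
  then show ?case using cp_step.IH by simp
qed

lemma sym_at_nth: "0 < p \<Longrightarrow> p \<le> length s \<Longrightarrow> sym_at s p = G (s ! (p - 1))"
  by (simp add: sym_at_def)

lemma Gam_nth: "set s \<subseteq> Gam i \<Longrightarrow> 0 < p \<Longrightarrow> p \<le> length s \<Longrightarrow> s ! (p - 1) \<in> Gam i"
  by (metis Suc_diff_1 Suc_le_lessD nth_mem subsetD)

lemma desc:
  assumes "h#hs \<in> FL i" "set s \<subseteq> Gam i" "0 < a" "a \<le> p" "p \<le> length s" "s ! (a - 1) = SL h"
    "\<forall>k. a < k \<and> k \<le> p \<longrightarrow> s ! (k - 1) \<noteq> SL h"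
  shows "cpath i s (D (h#hs), p) [] (T (h#hs), a + 1)"
  using assms(4-7)
proof (induction "p - a" arbitrary: p)
  case 0
  then have "p = a" by simp
  then show ?case using cp_one[OF tDR[OF assms(1)], of s p "a + 1"] assms(3) 0
    by (simp add: sym_at_nth)
next
  case (Suc x)
  have p0: "0 < p" using Suc assms(3) by simp
  have Z: "s ! (p - 1) \<in> Gam i" using Gam_nth[OF assms(2) p0 Suc.prems(2)] .
  have ne: "s ! (p - 1) \<noteq> SL h" using Suc.prems Suc.hyps(2) by auto
  have st: "cpath i s (D (h#hs), p) [] (D (h#hs), p - 1)"
    using cp_one[OF tDL[OF assms(1) Z ne], of s p "p - 1"] p0 Suc.prems(2)
    by (simp add: sym_at_nth)
  have rest: "cpath i s (D (h#hs), p - 1) [] (T (h#hs), a + 1)"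
    by (rule Suc.hyps(1)[of "p - 1"]) (use Suc.hyps(2) Suc.prems in auto)
  show ?case using cpath_trans[OF st rest] by simp
qed

lemma trav:
  assumes "codes m v d" "m \<le> h" "h#hs \<in> FL i" "s = pre @ d @ post" "set s \<subseteq> Gam i"
  shows "cpath i s (T (h#hs), Suc (length pre)) v (T (h#hs), Suc (length pre + length d))"
  using assms
proof (induction arbitrary: pre post h hs rule: codes.induct)
  case (c0 n) then show ?case by (simp add: cp_refl)
next
  case (cs n w c v d)
  define P1 where "P1 = Suc (length pre + length c)"
  define P2 where "P2 = Suc (length pre + length c + 1 + length d)"
  have s: "s = (pre @ c @ [SL n]) @ d @ (SM n # SRef n # post)" using cs.prems by simp
  have lp: "length (pre @ c @ [SL n]) = P1" unfolding P1_def by simp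
  have ls: "length s = length pre + length c + length d + 3 + length post" using s by simp
  have nh: "n < h" using cs.prems by simp
  have FL2: "n#h#hs \<in> FL i" using FL_push[OF cs.prems(2) nh] .
  have sP1: "s ! (P1 - 1) = SL n" using s unfolding P1_def by (simp add: nth_append)
  have sP2: "s ! (P2 - 1) = SM n" using s unfolding P2_def by (simp add: nth_append)
  have sP2': "s ! P2 = SRef n" using s unfolding P2_def by (simp add: nth_append)
  have h1: "cpath i s (T (h#hs), Suc (length pre)) w (T (h#hs), P1)"
    using cs.IH(1)[of h hs pre "SL n # d @ [SM n, SRef n] @ post"] cs.prems unfolding P1_def by simp
  have h2: "cpath i s (T (h#hs), P1) [AL n] (T (h#hs), P1 + 1)"
    using cp_one[OF tTL[OF cs.prems(2) nh], of s P1 "P1+1"] sP1 ls unfolding P1_def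
    by (simp add: sym_at_nth)
  have h3: "cpath i s (T (h#hs), P1 + 1) v (T (h#hs), P2)"
    using cs.IH(2)[of h hs "pre @ c @ [SL n]" "SM n # SRef n # post"] cs.prems s nh
    unfolding P1_def P2_def by simp
  have h4: "cpath i s (T (h#hs), P2) [AM n] (T (h#hs), P2 + 1)"
    using cp_one[OF tTM[OF cs.prems(2) nh], of s P2 "P2+1"] sP2 ls unfolding P2_def
    by (simp add: sym_at_nth)
  have h5: "cpath i s (T (h#hs), P2 + 1) [] (D (n#h#hs), P2)"
    using cp_one[OF tTRef[OF cs.prems(2) nh], of s "P2 + 1" "P2"] sP2' ls unfolding P2_def
    by (simp add: sym_at_nth)
  have between: "\<forall>k. P1 < k \<and> k \<le> P2 \<longrightarrow> s ! (k - 1) \<noteq> SL n"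
  proof (intro allI impI)
    fix k assume k: "P1 < k \<and> k \<le> P2"
    show "s ! (k - 1) \<noteq> SL n"
    proof (cases "k = P2")
      case True then show ?thesis using sP2 by simp
    next
      case False
      define j where "j = k - 1 - P1"
      have j: "j < length d" "k - 1 = P1 + j" using k False unfolding j_def P1_def P2_def by auto
      have "s ! (k - 1) = (d @ SM n # SRef n # post) ! j" using s j(2) lp nth_append_length_plus by metis
      then have "s ! (k - 1) = d ! j" using j(1) by (simp add: nth_append)
      moreover have "lvok n (d ! j)" using codes_lv[OF cs.hyps(2)] j(1) by simp
      ultimately show ?thesis by auto
    qed
  qed
  have h6: "cpath i s (D (n#h#hs), P2) [] (T (n#h#hs), P1 + 1)"
    using desc[OF FL2 cs.prems(4), of P1 P2] sP1 between ls unfolding P1_def P2_def by simp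
  have h7: "cpath i s (T (n#h#hs), P1 + 1) v (T (n#h#hs), P2)"
    using cs.IH(2)[of n "h#hs" "pre @ c @ [SL n]" "SM n # SRef n # post"] cs.prems s FL2
    unfolding P1_def P2_def by simp
  have h8: "cpath i s (T (n#h#hs), P2) [] (T (n#h#hs), P2 + 1)"
    using cp_one[OF tTMh[OF FL2], of s P2 "P2+1"] sP2 ls unfolding P2_def
    by (simp add: sym_at_nth)
  have h9: "cpath i s (T (n#h#hs), P2 + 1) [AR n] (T (h#hs), P2 + 2)"
    using cp_one[OF tTRh[OF FL2], of s "P2 + 1" "P2 + 2"] sP2' ls unfolding P2_def
    by (simp add: sym_at_nth)
  have all: "cpath i s (T (h#hs), Suc (length pre))
     (w @ [AL n] @ v @ [AM n] @ [] @ [] @ v @ [] @ [AR n]) (T (h#hs), P2 + 2)"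
    by (rule cpath_trans[OF h1 cpath_trans[OF h2 cpath_trans[OF h3 cpath_trans[OF h4
          cpath_trans[OF h5 cpath_trans[OF h6 cpath_trans[OF h7 cpath_trans[OF h8 h9]]]]]]]])
  show ?case using all unfolding P2_def blk_def by (simp add: add.assoc)
qed

lemma cmp:
  assumes "codes n v d" "n \<le> i" "s = c0 @ SL n # d @ [SM n]" "set s \<subseteq> Gam i"
  shows "cpath i s (D [n], length s) v (T [n], length s)"
proof -
  have FL1: "[n] \<in> FL i" using FL_single[OF assms(2)] .
  define a where "a = Suc (length c0)"
  have sa: "s ! (a - 1) = SL n" using assms(3) unfolding a_def by simp
  have between: "\<forall>k. a < k \<and> k \<le> length s \<longrightarrow> s ! (k - 1) \<noteq> SL n"
  proof (intro allI impI)
    fix k assume k: "a < k \<and> k \<le> length s"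
    show "s ! (k - 1) \<noteq> SL n"
    proof (cases "k = length s")
      case True then show ?thesis using assms(3) by (simp add: nth_append)
    next
      case False
      define j where "j = k - 1 - a"
      have j: "j < length d" "k - 1 = a + j" using k False assms(3) unfolding j_def a_def by auto
      have "s ! (k - 1) = d ! j" using assms(3) j unfolding a_def by (simp add: nth_append)
      moreover have "lvok n (d ! j)" using codes_lv[OF assms(1)] j(1) by simp
      ultimately show ?thesis by auto
    qed
  qed
  have h1: "cpath i s (D [n], length s) [] (T [n], a + 1)"
    using desc[OF FL1 assms(4), of a "length s"] sa between assms(3) unfolding a_def by simp
  have h2: "cpath i s (T [n], a + 1) v (T [n], length s)"
    using trav[OF assms(1) le_refl FL1, of s "c0 @ [SL n]" "[SM n]"] assms unfolding a_def by simp
  show ?thesis using cpath_trans[OF h1 h2] assms(3) unfolding a_def by simp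
qed

lemma push_step:
  assumes "(q, a, G (last s), q', Replace (last s # w)) \<in> dlt i" "s \<noteq> []"
  shows "sa_step (A0 i) (q, ol a @ u, s, length s) (q', u, s @ w, length (s @ w))"
proof -
  have sy: "sym_at s (length s) = G (last s)" using assms(2)
    by (simp add: sym_at_def last_conv_nth)
  have bl: "butlast s @ last s # w = s @ w" using assms(2)
    by (metis append.assoc append_Cons append_Nil append_butlast_last_id)
  show ?thesis unfolding sa_step_def prod.case using assms sy bl
    by (intro exI[of _ a] exI[of _ "G (last s)"] exI[of _ "Replace (last s # w)"])
       (auto simp: ol_def split: option.splits)
qed

lemma codes_Gam: "codes k w d \<Longrightarrow> k \<le> Suc i \<Longrightarrow> set d \<subseteq> Gam i"
proof
  fix x assume "codes k w d" "k \<le> Suc i" "x \<in> set d"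
  then have "lvok (Suc i) x" using codes_lv lvok_mono by blast
  then show "x \<in> Gam i" unfolding Gam_def by simp
qed

lemma run_Q:
  assumes "codes k w d" "k \<le> Suc i" "set cc \<subseteq> Gam i" "cc \<noteq> []"
  shows "(sa_step (A0 i))\<^sup>*\<^sup>* (Q k, w @ u, cc, length cc) (Q k, u, cc @ d, length (cc @ d))"
  using assms
proof (induction arbitrary: u cc rule: codes.induct)
  case (c0 n) then show ?case by simp
next
  case (cs n w c v d)
  define s1 where "s1 = cc @ c"
  define s2 where "s2 = s1 @ SL n # d @ [SM n]"
  have ni: "n \<le> i" using cs.prems by simp
  have gc: "set c \<subseteq> Gam i" using codes_Gam[OF cs.hyps(1)] cs.prems by simp
  have gd: "set d \<subseteq> Gam i" using codes_Gam[OF cs.hyps(2)] cs.prems by simp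
  have g1: "set s1 \<subseteq> Gam i" using gc cs.prems unfolding s1_def by simp
  have ne1: "s1 \<noteq> []" using cs.prems unfolding s1_def by simp
  have l1: "last s1 \<in> Gam i" using g1 ne1 by auto
  have SLg: "SL n \<in> Gam i" "SM n \<in> Gam i" "SRef n \<in> Gam i" using ni by (auto simp: Gam_def)
  have g2: "set s2 \<subseteq> Gam i" using g1 gd SLg unfolding s2_def by simp
  have r1: "(sa_step (A0 i))\<^sup>*\<^sup>* (Q (Suc n), w @ blk n v @ u, cc, length cc) (Q (Suc n), blk n v @ u, s1, length s1)"
    using cs.IH(1)[of cc "blk n v @ u"] cs.prems unfolding s1_def by simp
  have r2: "sa_step (A0 i) (Q (Suc n), blk n v @ u, s1, length s1) (Q n, v @ AM n # v @ [AR n] @ u, s1 @ [SL n], length (s1 @ [SL n]))"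
    using push_step[OF tQL[OF ni l1] ne1, of "v @ AM n # v @ [AR n] @ u"] unfolding blk_def by simp
  have r3: "(sa_step (A0 i))\<^sup>*\<^sup>* (Q n, v @ AM n # v @ [AR n] @ u, s1 @ [SL n], length (s1 @ [SL n]))
      (Q n, AM n # v @ [AR n] @ u, (s1 @ [SL n]) @ d, length ((s1 @ [SL n]) @ d))"
    using cs.IH(2)[of "s1 @ [SL n]" "AM n # v @ [AR n] @ u"] cs.prems g1 SLg by simp
  have ne3: "(s1 @ [SL n]) @ d \<noteq> []" by simp
  have l3: "last ((s1 @ [SL n]) @ d) \<in> Gam i" using gd SLg(1) g1 by (cases d rule: rev_cases) auto
  have r4: "sa_step (A0 i) (Q n, AM n # v @ [AR n] @ u, (s1 @ [SL n]) @ d, length ((s1 @ [SL n]) @ d))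
      (D [n], v @ [AR n] @ u, s2, length s2)"
    using push_step[OF tQM[OF ni l3] ne3, of "v @ [AR n] @ u"] unfolding s2_def by simp
  have c5: "cpath i s2 (D [n], length s2) v (T [n], length s2)"
    by (rule cmp[OF cs.hyps(2) ni _ g2]) (simp add: s2_def)
  have r5: "(sa_step (A0 i))\<^sup>*\<^sup>* (D [n], v @ [AR n] @ u, s2, length s2) (T [n], [AR n] @ u, s2, length s2)"
    using cpath_run[OF c5, of "[AR n] @ u"] by simp
  have ls2: "last s2 = SM n" unfolding s2_def by simp
  have r6: "sa_step (A0 i) (T [n], [AR n] @ u, s2, length s2) (Q (Suc n), u, s2 @ [SRef n], length (s2 @ [SRef n]))"
    using push_step[OF _ , of "T [n]" "Some (AR n)" s2 "Q (Suc n)" "[SRef n]" i u] tX[OF ni] ls2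
    unfolding s2_def by simp
  have fin: "s2 @ [SRef n] = cc @ c @ SL n # d @ [SM n, SRef n]" unfolding s2_def s1_def by simp
  show ?case
    using rtranclp_trans[OF r1 rtranclp_trans[OF r_into_rtranclp[of "sa_step (A0 i)", OF r2] rtranclp_trans[OF r3
          rtranclp_trans[OF r_into_rtranclp[of "sa_step (A0 i)", OF r4] rtranclp_trans[OF r5 r_into_rtranclp[of "sa_step (A0 i)", OF r6]]]]]]
    fin by (simp add: blk_def)
qed

lemma complete: "w \<in> Nw (Suc i) \<Longrightarrow> w \<in> sa_lang (A0 i)"
proof -
  assume "w \<in> Nw (Suc i)"
  then obtain d where d: "codes (Suc i) w d" using Nw_codes by blast
  have "(sa_step (A0 i))\<^sup>*\<^sup>* (Q (Suc i), w @ [], [SZ], length [SZ]) (Q (Suc i), [], [SZ] @ d, length ([SZ] @ d))"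
    by (rule run_Q[OF d]) (auto simp: Gam_def)
  then show ?thesis unfolding sa_lang_def by auto
qed




subsection \<open>Soundness\<close>

inductive ctx :: "nat \<Rightarrow> nat \<Rightarrow> ss list \<Rightarrow> letter list \<Rightarrow> bool" for i where
  x0: "ctx i (Suc i) [SZ] []"
| xs: "ctx i (Suc n) c x \<Longrightarrow> codes (Suc n) w d \<Longrightarrow> ctx i n (c @ d @ [SL n]) (x @ w @ [AL n])"

lemma ctx_le: "ctx i k c x \<Longrightarrow> k \<le> Suc i"
  by (induction rule: ctx.induct) auto

lemma ctx_Gam: "ctx i k c x \<Longrightarrow> set c \<subseteq> Gam i"
proof (induction rule: ctx.induct)
  case x0 then show ?case by (simp add: Gam_def)
next
  case (xs n c x w d)
  have "Suc n \<le> Suc i" using ctx_le[OF xs.hyps(1)] .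
  then show ?case using xs codes_Gam[OF xs.hyps(2)] by (auto simp: Gam_def)
qed

lemma ctx_ne: "ctx i k c x \<Longrightarrow> c \<noteq> []"
  by (induction rule: ctx.induct) auto

lemma ctx_top: "ctx i (Suc i) c x \<Longrightarrow> c = [SZ] \<and> x = []"
  by (cases rule: ctx.cases) (auto dest: ctx_le)

lemma ctx_lt: "ctx i n c x \<Longrightarrow> n \<le> i \<Longrightarrow>
  \<exists>c1 x1 w d. ctx i (Suc n) c1 x1 \<and> codes (Suc n) w d \<and> c = c1 @ d @ [SL n] \<and> x = x1 @ w @ [AL n]"
  by (cases rule: ctx.cases) auto

definition InvQ :: "nat \<Rightarrow> st \<Rightarrow> ss list \<Rightarrow> nat \<Rightarrow> letter list \<Rightarrow> bool" where
  "InvQ i q s p x \<longleftrightarrow> (\<exists>n c x0 w d. q = Q n \<and> ctx i n c x0 \<and> codes n w d \<and> s = c @ d \<and> x = x0 @ w \<and> p = length s)"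

definition InvC :: "nat \<Rightarrow> st \<Rightarrow> ss list \<Rightarrow> nat \<Rightarrow> letter list \<Rightarrow> bool" where
  "InvC i q s p x \<longleftrightarrow> (\<exists>n c1 x1 w' d' w d y z. (\<forall>m. q \<noteq> Q m) \<and> ctx i (Suc n) c1 x1 \<and> codes (Suc n) w' d'
     \<and> codes n w d \<and> s = c1 @ d' @ SL n # d @ [SM n] \<and> x = x1 @ w' @ AL n # w @ AM n # y
     \<and> cpath i s (q, p) z (T [n], length s) \<and> y @ z = w \<and> n \<le> i)"

lemma dlt_tr: "t \<in> dlt i \<Longrightarrow> tr t" by (simp add: dlt_def)

lemma last_sym: "s \<noteq> [] \<Longrightarrow> sym_at s (length s) = G (last s)"
  by (simp add: sym_at_def last_conv_nth)

lemma bl_last: "s \<noteq> [] \<Longrightarrow> butlast s @ last s # w = s @ w"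
  by (metis append.assoc append_Cons append_Nil append_butlast_last_id)

lemma stepQ:
  assumes inv: "InvQ i q s p x" and st: "sa_step (A0 i) (q, u, s, p) (q', u', s', p')"
  shows "\<exists>a. u = ol a @ u' \<and> (InvQ i q' s' p' (x @ ol a) \<or> InvC i q' s' p' (x @ ol a))"
proof -
  obtain n c x0 w d where I: "q = Q n" "ctx i n c x0" "codes n w d" "s = c @ d" "x = x0 @ w" "p = length s"
    using inv unfolding InvQ_def by blast
  obtain a X act where t: "(q, a, X, q', act) \<in> dlt i" "X = sym_at s p"
    "u = (case a of None \<Rightarrow> [] | Some b \<Rightarrow> [b]) @ u'"
    "(case act of MoveL \<Rightarrow> 0 < p \<and> s' = s \<and> p' = p - 1 | MoveR \<Rightarrow> p \<le> length s \<and> s' = s \<and> p' = p + 1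
      | Stay \<Rightarrow> s' = s \<and> p' = p | Replace w \<Rightarrow> s \<noteq> [] \<and> p = length s \<and> s' = butlast s @ w \<and> p' = length s')"
    using st unfolding sa_step_def by auto
  have u: "u = ol a @ u'" using t(3) by (simp add: ol_def)
  have sne: "s \<noteq> []" using ctx_ne[OF I(2)] I(4) by simp
  have X: "X = G (last s)" using t(2) I(6) last_sym[OF sne] by simp
  have "tr (Q n, a, X, q', act)" using dlt_tr t(1) I(1) by simp
  then consider (L) n0 where "n = Suc n0" "a = Some (AL n0)" "q' = Q n0" "act = Replace [last s, SL n0]"
    | (M) "a = Some (AM n)" "q' = D [n]" "act = Replace [last s, SM n]"
    unfolding tr_def X by auto
  then show ?thesis
  proof cases
    case L
    have s': "s' = s @ [SL n0]" "p' = length s'" using t(4) L(4) sne bl_last[OF sne, of "[SL n0]"]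
      by auto
    have cx: "ctx i n0 (c @ d @ [SL n0]) (x0 @ w @ [AL n0])" using ctx.xs[of i n0 c x0 w d] I L by simp
    have "InvQ i q' s' p' (x @ ol a)" unfolding InvQ_def
      apply (rule exI[of _ n0], rule exI[of _ "c @ d @ [SL n0]"], rule exI[of _ "x0 @ w @ [AL n0]"],
          rule exI[of _ "[]"], rule exI[of _ "[]"])
      using L s' I cx by (auto intro: codes.c0)
    then show ?thesis using u by blast
  next
    case M
    have s': "s' = s @ [SM n]" "p' = length s'" using t(4) M(3) sne bl_last[OF sne, of "[SM n]"]
      by auto
    have ni: "n \<le> i" using t(1) M(2) by (auto simp: dlt_def Stt_def FL_def)
    obtain c1 x1 w' d' where C: "ctx i (Suc n) c1 x1" "codes (Suc n) w' d'" "c = c1 @ d' @ [SL n]" "x0 = x1 @ w' @ [AL n]"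
      using ctx_lt[OF I(2) ni] by blast
    have s'e: "s' = c1 @ d' @ SL n # d @ [SM n]" using s' I(4) C(3) by simp
    have g: "set s' \<subseteq> Gam i" using ctx_Gam[OF I(2)] codes_Gam[OF I(3)] ni I(4) s' ctx_le[OF I(2)]
      by (auto simp: Gam_def)
    have cp: "cpath i s' (D [n], length s') w (T [n], length s')"
      by (rule cmp[OF I(3) ni _ g, of "c1 @ d'"]) (simp add: s'e)
    have "InvC i q' s' p' (x @ ol a)" unfolding InvC_def
      apply (rule exI[of _ n], rule exI[of _ c1], rule exI[of _ x1], rule exI[of _ w'], rule exI[of _ d'],
         rule exI[of _ w], rule exI[of _ d], rule exI[of _ "[]"], rule exI[of _ w])
      using C(1,2) I(3) M(1,2) s'e cp ni s'(2) I(5) C(4) by simp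
    then show ?thesis using u by blast
  qed
qed

lemma cpath_first:
  assumes "cpath i s (q, p) z e"
  obtains (refl) "(q, p) = e" "z = []"
  | (step) a1 q1 act1 p1 z1 where "(q, a1, sym_at s p, q1, act1) \<in> dlt i"
      "act1 = MoveL \<and> 0 < p \<and> p1 = p - 1 \<or> act1 = MoveR \<and> p \<le> length s \<and> p1 = p + 1"
      "cpath i s (q1, p1) z1 e" "z = ol a1 @ z1"
  using assms by (cases rule: cpath.cases) auto

lemma stepC:
  assumes inv: "InvC i q s p x" and st: "sa_step (A0 i) (q, u, s, p) (q', u', s', p')"
  shows "\<exists>a. u = ol a @ u' \<and> (InvQ i q' s' p' (x @ ol a) \<or> InvC i q' s' p' (x @ ol a))"
proof -
  obtain n c1 x1 w' d' w d y z where I: "\<forall>m. q \<noteq> Q m" "ctx i (Suc n) c1 x1" "codes (Suc n) w' d'"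
    "codes n w d" "s = c1 @ d' @ SL n # d @ [SM n]" "x = x1 @ w' @ AL n # w @ AM n # y"
    "cpath i s (q, p) z (T [n], length s)" "y @ z = w" "n \<le> i"
    using inv unfolding InvC_def by blast
  obtain a X act where t: "(q, a, X, q', act) \<in> dlt i" "X = sym_at s p"
    "u = (case a of None \<Rightarrow> [] | Some b \<Rightarrow> [b]) @ u'"
    "(case act of MoveL \<Rightarrow> 0 < p \<and> s' = s \<and> p' = p - 1 | MoveR \<Rightarrow> p \<le> length s \<and> s' = s \<and> p' = p + 1
      | Stay \<Rightarrow> s' = s \<and> p' = p | Replace w \<Rightarrow> s \<noteq> [] \<and> p = length s \<and> s' = butlast s @ w \<and> p' = length s')"
    using st unfolding sa_step_def by auto
  have u: "u = ol a @ u'" using t(3) by (simp add: ol_def)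
  have trt: "tr (q, a, X, q', act)" using dlt_tr t(1) by simp
  have sne: "s \<noteq> []" using I(5) by simp
  have ls: "last s = SM n" using I(5) by simp
  have endX: "sym_at s (length s) = G (SM n)" using last_sym[OF sne] ls by simp
  have trX: "tr (T [n], Some (AR n), G (SM n), Q (Suc n), Replace [SM n, SRef n])"
    using tX[OF I(9)] dlt_tr by blast
  show ?thesis
  proof (cases "\<exists>w0. act = Replace w0")
    case True
    then obtain w0 where w0: "act = Replace w0" by blast
    obtain h where h: "q = T [h]" "X = G (SM h)" "a = Some (AR h)" "q' = Q (Suc h)" "w0 = [SM h, SRef h]"
      using trt w0 I(1) unfolding tr_def by auto
    have e: "q = T [n] \<and> p = length s \<and> z = []"
      using I(7)
    proof (cases rule: cpath_first)
      case refl then show ?thesis by simp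
    next
      case (step a1 q1 act1 p1 z1)
      have "tr (q, a1, X, q1, act1)" using step(1) t(2) dlt_tr by simp
      then have "act1 = act" using tr_det[OF trt _ I(1)] by blast
      then show ?thesis using step(2) w0 by auto
    qed
    have hn: "h = n" using e h(1) by simp
    have yw: "y = w" using e I(8) by simp
    have s': "s' = s @ [SRef n]" "p' = length s'"
      using t(4) w0 h(5) hn bl_last[OF sne, of "[SRef n]"] ls by auto
    have cd: "codes (Suc n) (w' @ blk n w) (d' @ SL n # d @ [SM n, SRef n])"
      by (rule codes.cs[OF I(3) I(4)])
    have "InvQ i q' s' p' (x @ ol a)" unfolding InvQ_def
      apply (rule exI[of _ "Suc n"], rule exI[of _ c1], rule exI[of _ x1], rule exI[of _ "w' @ blk n w"],
          rule exI[of _ "d' @ SL n # d @ [SM n, SRef n]"])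
      using h hn yw s' cd I(2,5,6) by (simp add: blk_def)
    then show ?thesis using u by blast
  next
    case False
    then have mv: "s' = s \<and> (act = MoveL \<and> 0 < p \<and> p' = p - 1 \<or> act = MoveR \<and> p \<le> length s \<and> p' = p + 1 \<or> act = Stay \<and> p' = p)"
      using t(4) by (cases act) auto
    show ?thesis
      using I(7)
    proof (cases rule: cpath_first)
      case refl
      then have "q = T [n]" "p = length s" by auto
      then have "tr (T [n], a, G (SM n), q', act)" using trt t(2) endX by simp
      then have "act = Replace [SM n, SRef n]" using tr_det[OF trX] by blast
      then show ?thesis using False by blast
    next
      case (step a1 q1 act1 p1 z1)
      have "tr (q, a1, X, q1, act1)" using step(1) t(2) dlt_tr by simp
      then have eq: "a1 = a" "q1 = q'" "act1 = act" using tr_det[OF trt _ I(1)] by auto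
      have pp: "p1 = p'" using step(2) mv eq(3) by auto
      have nq: "\<forall>m. q' \<noteq> Q m" using tr_noQ[OF trt I(1)] False by blast
      have "InvC i q' s' p' (x @ ol a)" unfolding InvC_def
        apply (rule exI[of _ n], rule exI[of _ c1], rule exI[of _ x1], rule exI[of _ w'], rule exI[of _ d'],
           rule exI[of _ w], rule exI[of _ d], rule exI[of _ "y @ ol a"], rule exI[of _ z1])
        using nq I(2-6,8,9) step(3,4) eq pp mv by simp
      then show ?thesis using u by blast
    qed
  qed
qed

lemma reach:
  assumes "(sa_step (A0 i))\<^sup>*\<^sup>* c0 c" "c0 = (Q (Suc i), inp, [SZ], 1)"
  shows "\<exists>x. inp = x @ fst (snd c) \<and> (InvQ i (fst c) (fst (snd (snd c))) (snd (snd (snd c))) x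
                                     \<or> InvC i (fst c) (fst (snd (snd c))) (snd (snd (snd c))) x)"
  using assms
proof (induction rule: rtranclp_induct)
  case base
  have "InvQ i (Q (Suc i)) [SZ] 1 []" unfolding InvQ_def
    by (rule exI[of _ "Suc i"], rule exI[of _ "[SZ]"], rule exI[of _ "[]"], rule exI[of _ "[]"], rule exI[of _ "[]"])
       (auto intro: ctx.x0 codes.c0)
  then show ?case using base by simp
next
  case (step b c)
  obtain q u s p where b: "b = (q, u, s, p)" by (cases b) auto
  obtain q' u' s' p' where c: "c = (q', u', s', p')" by (cases c) auto
  obtain x where x: "inp = x @ u" "InvQ i q s p x \<or> InvC i q s p x" using step.IH step.prems b by auto
  have "\<exists>a. u = ol a @ u' \<and> (InvQ i q' s' p' (x @ ol a) \<or> InvC i q' s' p' (x @ ol a))"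
    using x(2) stepQ[of i q s p x u q' u' s' p'] stepC[of i q s p x u q' u' s' p'] step.hyps(2) b c by blast
  then show ?case using x(1) c by auto
qed

lemma sound: "w \<in> sa_lang (A0 i) \<Longrightarrow> w \<in> Nw (Suc i)"
proof -
  assume "w \<in> sa_lang (A0 i)"
  then obtain s p where r: "(sa_step (A0 i))\<^sup>*\<^sup>* (Q (Suc i), w, [SZ], 1) (Q (Suc i), [], s, p)"
    unfolding sa_lang_def by auto
  obtain x where x: "w = x" "InvQ i (Q (Suc i)) s p x \<or> InvC i (Q (Suc i)) s p x"
    using reach[OF r refl] by auto
  have "InvQ i (Q (Suc i)) s p x" using x(2) unfolding InvC_def by blast
  then obtain c x0 w1 d where "ctx i (Suc i) c x0" "codes (Suc i) w1 d" "x = x0 @ w1"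
    unfolding InvQ_def by auto
  then show ?thesis using x(1) ctx_top codes_Nw by fastforce
qed

theorem A0_lang: "sa_lang (A0 i) = Nw (Suc i)"
  using sound complete by blast




lemma FL_finite: "finite (FL i)"
proof (rule finite_subset)
  show "FL i \<subseteq> {xs. set xs \<subseteq> {..i} \<and> length xs \<le> Suc i}"
  proof
    fix l assume l: "l \<in> FL i"
    then have "distinct l" "set l \<subseteq> {..i}" by (auto simp: FL_def strict_sorted_iff)
    then have "length l \<le> Suc i"
      using card_mono[of "{..i}" "set l"] distinct_card[of l] by simp
    then show "l \<in> {xs. set xs \<subseteq> {..i} \<and> length xs \<le> Suc i}" using \<open>set l \<subseteq> {..i}\<close> by simp
  qed
  show "finite {xs. set xs \<subseteq> {..i} \<and> length xs \<le> Suc i}" by (rule finite_lists_length_le) simp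
qed

lemma Stt_finite: "finite (Stt i)"
  unfolding Stt_def using FL_finite by simp

lemma Gam_finite: "finite (Gam i)"
proof (rule finite_subset)
  show "Gam i \<subseteq> insert SZ (SL ` {..i} \<union> SM ` {..i} \<union> SRef ` {..i})"
  proof
    fix x assume "x \<in> Gam i" then show "x \<in> insert SZ (SL ` {..i} \<union> SM ` {..i} \<union> SRef ` {..i})"
      by (cases x) (auto simp: Gam_def)
  qed
qed simp

lemma dlt_finite: "finite (dlt i)"
proof (rule finite_subset)
  show "dlt i \<subseteq> Stt i \<times> (insert None (Some ` Lets i)) \<times> (insert Bot (insert Top (G ` Gam i))) \<times> Stt i
      \<times> (insert MoveL (insert MoveR (insert Stay (Replace ` {w. set w \<subseteq> Gam i \<and> length w = 2}))))"
  proof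
    fix t assume t: "t \<in> dlt i"
    obtain q a X q' act where tt: "t = (q, a, X, q', act)" by (cases t) auto
    show "t \<in> Stt i \<times> (insert None (Some ` Lets i)) \<times> (insert Bot (insert Top (G ` Gam i))) \<times> Stt i
      \<times> (insert MoveL (insert MoveR (insert Stay (Replace ` {w. set w \<subseteq> Gam i \<and> length w = 2}))))"
      using t unfolding tt dlt_def
      by (cases a; cases X; cases act) auto
  qed
  show "finite (Stt i \<times> (insert None (Some ` Lets i)) \<times> (insert Bot (insert Top (G ` Gam i))) \<times> Stt i
      \<times> (insert MoveL (insert MoveR (insert Stay (Replace ` {w. set w \<subseteq> Gam i \<and> length w = 2})))))"
    using Stt_finite Gam_finite finite_lists_length_eq[OF Gam_finite]
    by (simp add: Lets_def)
qed

lemma A0_wf: "sa_wf (A0 i)"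
  unfolding sa_wf_def using Stt_finite Gam_finite dlt_finite
  by (auto simp: Stt_def Gam_def dlt_def)

lemma A0_nonerasing: "nonerasing (A0 i)"
  unfolding nonerasing_def by (auto simp: dlt_def tr_def)

subsection \<open>Renaming\<close>

definition rn :: "('q \<Rightarrow> nat) \<Rightarrow> ('g \<Rightarrow> nat) \<Rightarrow> ('q, 'g) sa \<Rightarrow> (nat, nat) sa" where
  "rn f g A = \<lparr>states = f ` states A, init = f (init A), finals = f ` finals A,
     stack_alph = g ` stack_alph A, z0 = g (z0 A),
     delta = (\<lambda>(q, a, X, q', act). (f q, a, map_stsym g X, f q', map_action g act)) ` delta A\<rparr>"

lemma rn_simps[simp]: "states (rn f g A) = f ` states A" "init (rn f g A) = f (init A)"
  "finals (rn f g A) = f ` finals A" "stack_alph (rn f g A) = g ` stack_alph A" "z0 (rn f g A) = g (z0 A)"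
  "delta (rn f g A) = (\<lambda>(q, a, X, q', act). (f q, a, map_stsym g X, f q', map_action g act)) ` delta A"
  by (simp_all add: rn_def)

lemma sym_at_map: "sym_at (map g s) p = map_stsym g (sym_at s p)"
  by (simp add: sym_at_def)

lemma step_fwd:
  assumes "sa_step A (q, u, s, p) (q', u', s', p')"
  shows "sa_step (rn f g A) (f q, u, map g s, p) (f q', u', map g s', p')"
proof -
  obtain a X act where t: "(q, a, X, q', act) \<in> delta A" "p \<le> length s + 1" "X = sym_at s p"
    "u = (case a of None \<Rightarrow> [] | Some b \<Rightarrow> [b]) @ u'"
    "(case act of MoveL \<Rightarrow> 0 < p \<and> s' = s \<and> p' = p - 1 | MoveR \<Rightarrow> p \<le> length s \<and> s' = s \<and> p' = p + 1
      | Stay \<Rightarrow> s' = s \<and> p' = p | Replace w \<Rightarrow> s \<noteq> [] \<and> p = length s \<and> s' = butlast s @ w \<and> p' = length s')"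
    using assms unfolding sa_step_def by auto
  have m: "(f q, a, map_stsym g X, f q', map_action g act) \<in> delta (rn f g A)"
    using t(1) by force
  show ?thesis unfolding sa_step_def prod.case
    apply (rule exI[of _ a], rule exI[of _ "map_stsym g X"], rule exI[of _ "map_action g act"])
    using m t by (cases act) (auto simp: sym_at_map map_butlast)
qed

lemma step_bwd:
  assumes "inj f" "inj g" "sa_step (rn f g A) (f q, u, map g s, p) (q2, u', s2, p')"
  shows "\<exists>q' s'. q2 = f q' \<and> s2 = map g s' \<and> sa_step A (q, u, s, p) (q', u', s', p')"
proof -
  obtain a Y act2 where t: "(f q, a, Y, q2, act2) \<in> delta (rn f g A)" "p \<le> length (map g s) + 1"
    "Y = sym_at (map g s) p"
    "u = (case a of None \<Rightarrow> [] | Some b \<Rightarrow> [b]) @ u'"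
    "(case act2 of MoveL \<Rightarrow> 0 < p \<and> s2 = map g s \<and> p' = p - 1 | MoveR \<Rightarrow> p \<le> length (map g s) \<and> s2 = map g s \<and> p' = p + 1
      | Stay \<Rightarrow> s2 = map g s \<and> p' = p | Replace w \<Rightarrow> map g s \<noteq> [] \<and> p = length (map g s) \<and> s2 = butlast (map g s) @ w \<and> p' = length s2)"
    using assms(3) unfolding sa_step_def prod.case by blast
  obtain q0 X0 q0' act0 where o: "(q0, a, X0, q0', act0) \<in> delta A" "f q0 = f q" "Y = map_stsym g X0"
    "q2 = f q0'" "act2 = map_action g act0"
    using t(1) by auto
  have qq: "q0 = q" using o(2) assms(1) by (simp add: inj_eq)
  have XX: "X0 = sym_at s p" using o(3) t(3) sym_at_map stsym.inj_map[OF assms(2)]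
    by (metis injD)
  show ?thesis
  proof (cases act0)
    case (Replace w0)
    have "s2 = map g (butlast s @ w0)" using t(5) o(5) Replace by (simp add: map_butlast)
    moreover have "sa_step A (q, u, s, p) (q0', u', butlast s @ w0, p')"
      unfolding sa_step_def prod.case
      apply (rule exI[of _ a], rule exI[of _ X0], rule exI[of _ act0])
      using o(1) qq XX t Replace o(5) by auto
    ultimately show ?thesis using o(4) by blast
  next
    case MoveL
    have "sa_step A (q, u, s, p) (q0', u', s, p')"
      unfolding sa_step_def prod.case
      apply (rule exI[of _ a], rule exI[of _ X0], rule exI[of _ act0])
      using o(1) qq XX t MoveL o(5) by auto
    moreover have "s2 = map g s" using t(5) o(5) MoveL by simp
    ultimately show ?thesis using o(4) by blast
  next
    case MoveR
    have "sa_step A (q, u, s, p) (q0', u', s, p')"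
      unfolding sa_step_def prod.case
      apply (rule exI[of _ a], rule exI[of _ X0], rule exI[of _ act0])
      using o(1) qq XX t MoveR o(5) by auto
    moreover have "s2 = map g s" using t(5) o(5) MoveR by simp
    ultimately show ?thesis using o(4) by blast
  next
    case Stay
    have "sa_step A (q, u, s, p) (q0', u', s, p')"
      unfolding sa_step_def prod.case
      apply (rule exI[of _ a], rule exI[of _ X0], rule exI[of _ act0])
      using o(1) qq XX t Stay o(5) by auto
    moreover have "s2 = map g s" using t(5) o(5) Stay by simp
    ultimately show ?thesis using o(4) by blast
  qed
qed

lemma run_fwd:
  assumes "(sa_step A)\<^sup>*\<^sup>* c c'"
  shows "(sa_step (rn f g A))\<^sup>*\<^sup>* (case c of (q, u, s, p) \<Rightarrow> (f q, u, map g s, p)) (case c' of (q, u, s, p) \<Rightarrow> (f q, u, map g s, p))"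
  using assms
proof (induction rule: rtranclp_induct)
  case base then show ?case by simp
next
  case (step b c)
  then show ?case
    by (cases b; cases c) (auto intro: rtranclp.rtrancl_into_rtrancl step_fwd)
qed

lemma run_bwd:
  assumes "inj f" "inj g" "(sa_step (rn f g A))\<^sup>*\<^sup>* c0 c" "c0 = (f q, u, map g s, p)"
  shows "\<exists>q' s'. fst c = f q' \<and> fst (snd (snd c)) = map g s' \<and> (sa_step A)\<^sup>*\<^sup>* (q, u, s, p) (q', fst (snd c), s', snd (snd (snd c)))"
  using assms(3,4)
proof (induction rule: rtranclp_induct)
  case base then show ?case by auto
next
  case (step b c)
  obtain q1 s1 where h: "fst b = f q1" "fst (snd (snd b)) = map g s1"
    "(sa_step A)\<^sup>*\<^sup>* (q, u, s, p) (q1, fst (snd b), s1, snd (snd (snd b)))" using step by blast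
  obtain qb ub sb pb where b: "b = (qb, ub, sb, pb)" by (cases b) auto
  obtain qc uc sc pc where c: "c = (qc, uc, sc, pc)" by (cases c) auto
  have "sa_step (rn f g A) (f q1, ub, map g s1, pb) (qc, uc, sc, pc)" using step.hyps(2) h b c by simp
  then obtain q' s' where "qc = f q'" "sc = map g s'" "sa_step A (q1, ub, s1, pb) (q', uc, s', pc)"
    using step_bwd[OF assms(1,2)] by blast
  then show ?case using h b c by (auto intro: rtranclp.rtrancl_into_rtrancl)
qed

lemma rn_lang: assumes "inj f" "inj g" shows "sa_lang (rn f g A) = sa_lang A"
proof
  show "sa_lang (rn f g A) \<subseteq> sa_lang A"
  proof
    fix w assume "w \<in> sa_lang (rn f g A)"
    then obtain q s p where r: "(sa_step (rn f g A))\<^sup>*\<^sup>* (f (init A), w, [g (z0 A)], 1) (q, [], s, p)" "q \<in> f ` finals A"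
      unfolding sa_lang_def by auto
    obtain q' s' where "q = f q'" "(sa_step A)\<^sup>*\<^sup>* (init A, w, [z0 A], 1) (q', [], s', p)"
      using run_bwd[OF assms r(1), of "init A" w "[z0 A]" 1] by auto
    moreover have "q' \<in> finals A" using r(2) \<open>q = f q'\<close> assms(1) by (auto simp: inj_eq)
    ultimately show "w \<in> sa_lang A" unfolding sa_lang_def by auto
  qed
  show "sa_lang A \<subseteq> sa_lang (rn f g A)"
  proof
    fix w assume "w \<in> sa_lang A"
    then obtain q s p where r: "(sa_step A)\<^sup>*\<^sup>* (init A, w, [z0 A], 1) (q, [], s, p)" "q \<in> finals A"
      unfolding sa_lang_def by auto
    show "w \<in> sa_lang (rn f g A)" using run_fwd[OF r(1), of f g] r(2) unfolding sa_lang_def by auto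
  qed
qed

lemma rn_wf: assumes "sa_wf A" shows "sa_wf (rn f g A)"
proof -
  have d: "\<forall>(q, a, X, q', act) \<in> delta (rn f g A). q \<in> states (rn f g A) \<and> q' \<in> states (rn f g A)
          \<and> (\<forall>Z. X = G Z \<longrightarrow> Z \<in> stack_alph (rn f g A))
          \<and> (\<forall>w. act = Replace w \<longrightarrow> set w \<subseteq> stack_alph (rn f g A))"
  proof (clarsimp)
    fix q0 a X0 q0' act0
    assume m: "(q0, a, X0, q0', act0) \<in> delta A"
    have w: "q0 \<in> states A" "q0' \<in> states A" "\<forall>Z. X0 = G Z \<longrightarrow> Z \<in> stack_alph A"
      "\<forall>w. act0 = Replace w \<longrightarrow> set w \<subseteq> stack_alph A"
      using assms m unfolding sa_wf_def by fastforce+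
    show "f q0 \<in> f ` states A \<and> f q0' \<in> f ` states A \<and> (\<forall>Z. map_stsym g X0 = G Z \<longrightarrow> Z \<in> g ` stack_alph A) \<and>
       (\<forall>w. map_action g act0 = Replace w \<longrightarrow> set w \<subseteq> g ` stack_alph A)"
      using w by (cases X0; cases act0) auto
  qed
  show ?thesis using assms d unfolding sa_wf_def by auto
qed

lemma rn_nonerasing: assumes "nonerasing A" shows "nonerasing (rn f g A)"
  unfolding nonerasing_def
proof (clarsimp)
  fix q0 a X0 q0' act0 w
  assume m: "(q0, a, X0, q0', act0) \<in> delta A" and r: "map_action g act0 = Replace w"
  obtain w0 where w0: "act0 = Replace w0" "w = map g w0" using r by (cases act0) auto
  obtain Z w' where "X0 = G Z" "w0 = Z # w'" using assms m w0 unfolding nonerasing_def by fastforce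
  then show "\<exists>Z. map_stsym g X0 = G Z \<and> (\<exists>w'. w = Z # w')" using w0 by auto
qed

instance st :: countable by countable_datatype
instance ss :: countable by countable_datatype

theorem theorem3:
  shows "\<forall>i::nat. \<exists>A :: (nat, nat) sa. sa_wf A \<and> nonerasing A \<and> sa_lang A = rewb_lang (larsen i)"
proof
  fix i
  let ?A = "rn to_nat to_nat (A0 i)"
  have "sa_lang ?A = rewb_lang (larsen i)"
    using rn_lang[OF inj_to_nat inj_to_nat, of "A0 i"] A0_lang[of i] rewb_lang_larsen[of i] by simp
  then show "\<exists>A :: (nat, nat) sa. sa_wf A \<and> nonerasing A \<and> sa_lang A = rewb_lang (larsen i)"
    using rn_wf[OF A0_wf] rn_nonerasing[OF A0_nonerasing] by blast
qed


end
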